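(* Let $x\in\mathbb{S}$. Then, as $N\to\infty$ over integers, $\epsilon(N)\to0$, $\epsilon(N,x)\to0$ and $P_N(x,\{x\})\to\pi(\{x\})$.
   Context: Let $\pi,q$ be probability densities with respect to a $\sigma$-finite measure $\mu$ on $(\mathbb{X},\mathcal{X})$ (singletons measurable) with $q>0$ wherever $\pi>0$; $\pi(dx)=\pi(x)\mu(dx)$, $\pi(A)=\int_A\pi(dx)$, $q(dx)=q(x)\mu(dx)$, $\mathbb{S}=\{\pi>0\}$, $w=\pi/q$ on $\mathbb{S}$ and $0$ elsewhere. For integer $N\ge1$ and $z_1\in\mathbb{S}$: $P_N(z_1,A)=\int_{\mathbb{X}^{N-1}}\sum_{i=1}^N\frac{w(z_i)}{\sum_{j=1}^Nw(z_j)}\mathbf 1\{z_i\in A\}\prod_{n=2}^Nq(dz_n)$ ($P_1(z,\cdot)=\delta_z$), $\epsilon(N,z_1)=\int_{\mathbb{X}^{N-1}}\frac{w(z_1)}{\sum_{i=1}^Nw(z_i)}\prod_{n=2}^Nq(dz_n)$, $\epsilon(N)=\int_{\mathbb{S}}\epsilon(N,z)\pi(dz)$. *)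

theory Defs
  imports "HOL-Probability.Probability"
begin

definition supp_pi :: "'a measure \<Rightarrow> ('a \<Rightarrow> real) \<Rightarrow> 'a set" where
  "supp_pi M p = {x \<in> space M. p x > 0}"

definition wt :: "'a measure \<Rightarrow> ('a \<Rightarrow> real) \<Rightarrow> ('a \<Rightarrow> real) \<Rightarrow> 'a \<Rightarrow> real" where
  "wt M p q x = (if x \<in> supp_pi M p then p x / q x else 0)"

definition prop_prod :: "'a measure \<Rightarrow> ('a \<Rightarrow> real) \<Rightarrow> nat \<Rightarrow> (nat \<Rightarrow> 'a) measure" where
  "prop_prod M q N = PiM {2..N} (\<lambda>_. density M (\<lambda>x. ennreal (q x)))"

definition PN :: "'a measure \<Rightarrow> ('a \<Rightarrow> real) \<Rightarrow> ('a \<Rightarrow> real) \<Rightarrow> nat \<Rightarrow> 'a \<Rightarrow> 'a set \<Rightarrow> real" where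
  "PN M p q N z1 A = (\<integral>z. (let z' = z(1 := z1) in
       (\<Sum>i\<in>{1..N}. wt M p q (z' i) / (\<Sum>j\<in>{1..N}. wt M p q (z' j)) * indicator A (z' i)))
     \<partial>(prop_prod M q N))"

definition eps_pt :: "'a measure \<Rightarrow> ('a \<Rightarrow> real) \<Rightarrow> ('a \<Rightarrow> real) \<Rightarrow> nat \<Rightarrow> 'a \<Rightarrow> real" where
  "eps_pt M p q N z1 = (\<integral>z. (let z' = z(1 := z1) in
       wt M p q z1 / (\<Sum>i\<in>{1..N}. wt M p q (z' i))) \<partial>(prop_prod M q N))"

definition eps_avg :: "'a measure \<Rightarrow> ('a \<Rightarrow> real) \<Rightarrow> ('a \<Rightarrow> real) \<Rightarrow> nat \<Rightarrow> real" where
  "eps_avg M p q N = (\<integral>z. indicator (supp_pi M p) z * eps_pt M p q N z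
       \<partial>(density M (\<lambda>x. ennreal (p x))))"

end

theory Submission
  imports Defs
begin


locale Qprob = prob_space Q for Q :: "'a measure"
begin

lemma PP_prob: "prob_space (PiM I (\<lambda>_. Q))"
  by (intro prob_space_PiM) (simp add: prob_space_axioms)

lemma comp_int:
  fixes h :: "'a \<Rightarrow> real"
  assumes "i \<in> I" "h \<in> borel_measurable Q"
  shows "integral\<^sup>L (PiM I (\<lambda>_. Q)) (\<lambda>z. h (z i)) = expectation h"
    and "integrable Q h \<Longrightarrow> integrable (PiM I (\<lambda>_. Q)) (\<lambda>z. h (z i))"
proof -
  have d: "distr (PiM I (\<lambda>_. Q)) Q (\<lambda>\<omega>. \<omega> i) = Q"
    using distr_PiM_component[of I "\<lambda>_. Q" i] assms prob_space_axioms by simp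
  have m: "(\<lambda>\<omega>. \<omega> i) \<in> measurable (PiM I (\<lambda>_. Q)) Q"
    using assms(1) by (rule measurable_component_singleton)
  show "integral\<^sup>L (PiM I (\<lambda>_. Q)) (\<lambda>z. h (z i)) = expectation h"
    using integral_distr[OF m assms(2)] d by simp
  show "integrable Q h \<Longrightarrow> integrable (PiM I (\<lambda>_. Q)) (\<lambda>z. h (z i))"
    using integrable_distr_eq[OF m assms(2)] d by simp
qed

lemma comp_int2:
  fixes h g :: "'a \<Rightarrow> real"
  assumes "finite I" "i \<in> I" "j \<in> I" "i \<noteq> j" "integrable Q h" "integrable Q g"
  shows "integral\<^sup>L (PiM I (\<lambda>_. Q)) (\<lambda>z. h (z i) * g (z j)) = expectation h * expectation g"
    and "integrable (PiM I (\<lambda>_. Q)) (\<lambda>z. h (z i) * g (z j))"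
proof -
  interpret PS: product_prob_space "\<lambda>_. Q" I
    by unfold_locales
  define f where "f k y = (if k = i then h y else 1) * (if k = j then g y else 1)" for k y
  have fi: "integrable Q (f k)" for k
  proof -
    have "integrable Q (\<lambda>_. 1::real)" by simp
    then show ?thesis using assms by (cases "k = i"; cases "k = j") (auto simp: f_def[abs_def])
  qed
  have p: "(\<Prod>k\<in>I. f k (z k)) = h (z i) * g (z j)" for z
    using assms by (simp add: f_def prod.distrib)
  have p2: "(\<Prod>k\<in>I. integral\<^sup>L Q (f k)) = expectation h * expectation g"
  proof -
    have "(\<Prod>k\<in>I. integral\<^sup>L Q (f k)) = (\<Prod>k\<in>I. (if k = i then expectation h else 1) * (if k = j then expectation g else 1))"
      using assms by (intro prod.cong) (auto simp: f_def[abs_def] prob_space)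
    also have "\<dots> = expectation h * expectation g"
      using assms by (simp add: prod.distrib)
    finally show ?thesis .
  qed
  show "integral\<^sup>L (PiM I (\<lambda>_. Q)) (\<lambda>z. h (z i) * g (z j)) = expectation h * expectation g"
    using PS.product_integral_prod[OF assms(1), of f] fi p p2 by simp
  show "integrable (PiM I (\<lambda>_. Q)) (\<lambda>z. h (z i) * g (z j))"
    using PS.product_integrable_prod[OF assms(1), of f] fi p by simp
qed

lemma cheb:
  fixes g :: "'a \<Rightarrow> real"
  assumes fin: "finite I" and gm[measurable]: "g \<in> borel_measurable Q"
    and gb: "\<And>y. y \<in> space Q \<Longrightarrow> \<bar>g y\<bar> \<le> B" and t: "t > 0"
  shows "measure (PiM I (\<lambda>_. Q)) {z \<in> space (PiM I (\<lambda>_. Q)).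
            t \<le> \<bar>(\<Sum>i\<in>I. g (z i)) - real (card I) * expectation g\<bar>}
         \<le> real (card I) * (2*B)^2 / t^2"
proof -
  let ?P = "PiM I (\<lambda>_. Q)"
  interpret P: prob_space ?P by (rule PP_prob)
  define \<mu> where "\<mu> = expectation g"
  define h where "h y = g y - \<mu>" for y
  have gi: "integrable Q g"
    using gb by (intro integrable_const_bound[where B=B]) auto
  have hm[measurable]: "h \<in> borel_measurable Q" unfolding h_def[abs_def] by simp
  have hi: "integrable Q h" unfolding h_def[abs_def] using gi by simp
  have Eh: "expectation h = 0" unfolding h_def[abs_def] \<mu>_def using gi by (simp add: prob_space)
  have mub: "\<bar>\<mu>\<bar> \<le> B"
  proof -
    have "\<bar>\<mu>\<bar> \<le> expectation (\<lambda>y. \<bar>g y\<bar>)" unfolding \<mu>_def by (rule integral_abs_bound)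
    also have "\<dots> \<le> expectation (\<lambda>y. B)"
      using gi gb by (intro integral_mono) auto
    finally show ?thesis by (simp add: prob_space)
  qed
  have hb: "\<bar>h y\<bar> \<le> 2*B" if "y \<in> space Q" for y
    using gb[OF that] mub unfolding h_def by linarith
  have hhi: "integrable Q (\<lambda>y. h y * h y)"
  proof (rule integrable_const_bound[where B="(2*B)*(2*B)"])
    show "AE x in Q. norm (h x * h x) \<le> 2 * B * (2 * B)"
    proof (intro AE_I2)
      fix y assume "y \<in> space Q"
      then have hy: "\<bar>h y\<bar> \<le> 2*B" using hb by fastforce
      then have "0 \<le> B" by linarith
      then show "norm (h y * h y) \<le> 2 * B * (2 * B)" unfolding real_norm_def abs_mult using hy by (intro mult_mono) auto
    qed
  qed simp
  have Ehh: "expectation (\<lambda>y. h y * h y) \<le> (2*B)^2"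
  proof -
    have "expectation (\<lambda>y. h y * h y) \<le> expectation (\<lambda>y. (2*B)^2)"
    proof (intro integral_mono)
      fix y assume "y \<in> space Q"
      then have "\<bar>h y\<bar> \<le> \<bar>2*B\<bar>" using hb by fastforce
      then show "h y * h y \<le> (2*B)^2" by (simp add: abs_le_square_iff power2_eq_square)
    qed (use hhi in auto)
    then show ?thesis by (simp add: prob_space)
  qed
  define T where "T z = (\<Sum>i\<in>I. h (z i))" for z
  have T_eq: "T z = (\<Sum>i\<in>I. g (z i)) - real (card I) * \<mu>" for z
    unfolding T_def h_def by (simp add: sum_subtractf)
  have TT: "T z ^ 2 = (\<Sum>i\<in>I. \<Sum>j\<in>I. h (z i) * h (z j))" for z
    unfolding T_def power2_eq_square by (simp add: sum_product)
  have int_ij: "integrable ?P (\<lambda>z. h (z i) * h (z j))" if "i \<in> I" "j \<in> I" for i j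
  proof (cases "i = j")
    case True
    then show ?thesis using comp_int(2)[OF that(1) _ hhi] by simp
  next
    case False
    then show ?thesis using comp_int2(2)[OF fin that False hi hi] by simp
  qed
  have E_ij: "integral\<^sup>L ?P (\<lambda>z. h (z i) * h (z j)) = (if i = j then expectation (\<lambda>y. h y * h y) else 0)"
    if "i \<in> I" "j \<in> I" for i j
  proof (cases "i = j")
    case True
    then show ?thesis using comp_int(1)[OF that(1), of "\<lambda>y. h y * h y"] by simp
  next
    case False
    then show ?thesis using comp_int2(1)[OF fin that False hi hi] Eh by simp
  qed
  have intT: "integrable ?P (\<lambda>z. T z ^ 2)"
    unfolding TT
  proof (rule Bochner_Integration.integrable_sum)
    fix i assume "i \<in> I"
    then show "integrable ?P (\<lambda>z. \<Sum>j\<in>I. h (z i) * h (z j))"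
      using int_ij by (intro Bochner_Integration.integrable_sum) auto
  qed
  have ET: "integral\<^sup>L ?P (\<lambda>z. T z ^ 2) = (\<Sum>i\<in>I. \<Sum>j\<in>I. (if i = j then expectation (\<lambda>y. h y * h y) else 0))"
  proof -
    have "integral\<^sup>L ?P (\<lambda>z. T z ^ 2) = (\<Sum>i\<in>I. integral\<^sup>L ?P (\<lambda>z. \<Sum>j\<in>I. h (z i) * h (z j)))"
      unfolding TT
    proof (rule Bochner_Integration.integral_sum)
      fix i assume "i \<in> I"
      then show "integrable ?P (\<lambda>z. \<Sum>j\<in>I. h (z i) * h (z j))"
        using int_ij by (intro Bochner_Integration.integrable_sum) auto
    qed
    also have "\<dots> = (\<Sum>i\<in>I. \<Sum>j\<in>I. integral\<^sup>L ?P (\<lambda>z. h (z i) * h (z j)))"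
    proof (rule sum.cong[OF refl])
      fix i assume "i \<in> I"
      then show "integral\<^sup>L ?P (\<lambda>z. \<Sum>j\<in>I. h (z i) * h (z j)) = (\<Sum>j\<in>I. integral\<^sup>L ?P (\<lambda>z. h (z i) * h (z j)))"
        using int_ij by (intro Bochner_Integration.integral_sum) auto
    qed
    also have "\<dots> = (\<Sum>i\<in>I. \<Sum>j\<in>I. (if i = j then expectation (\<lambda>y. h y * h y) else 0))"
      using E_ij by (intro sum.cong refl) auto
    finally show ?thesis .
  qed
  also have "\<dots> = real (card I) * expectation (\<lambda>y. h y * h y)"
    using fin by simp
  also have "\<dots> \<le> real (card I) * (2*B)^2"
    using Ehh by (intro mult_left_mono) auto
  finally have ETb: "integral\<^sup>L ?P (\<lambda>z. T z ^ 2) \<le> real (card I) * (2*B)^2" .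
  have "{z \<in> space ?P. t \<le> \<bar>(\<Sum>i\<in>I. g (z i)) - real (card I) * expectation g\<bar>}
       = {z \<in> space ?P. t^2 \<le> T z ^ 2}"
    using t by (auto simp: T_eq \<mu>_def abs_le_square_iff[symmetric])
  also have "measure ?P \<dots> \<le> integral\<^sup>L ?P (\<lambda>z. T z ^ 2) / t^2"
    using t intT by (intro integral_Markov_inequality_measure[where A="space ?P"]) auto
  also have "\<dots> \<le> real (card I) * (2*B)^2 / t^2"
    using ETb t by (intro divide_right_mono) auto
  finally show ?thesis .
qed

end


lemma mono_frac:
  fixes X X' Y Y' :: real
  assumes "0 < X" "X \<le> X'" "0 \<le> Y'" "Y' \<le> Y"
  shows "X / (X + Y) \<le> X' / (X' + Y')"
proof -
  have "X * (X' + Y') \<le> X' * (X + Y)"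
  proof -
    have "X * Y' \<le> X' * Y" using assms by (intro mult_mono) auto
    then show ?thesis by (simp add: algebra_simps)
  qed
  then show ?thesis using assms by (simp add: divide_simps)
qed

lemma tangent:
  fixes c R m :: real
  assumes "0 < c" "0 \<le> R" "0 \<le> m"
  shows "c / (c + m) - c / (c + m)^2 * (R - m) \<le> c / (c + R)"
proof -
  define A where "A = c + R"
  define B where "B = c + m"
  have A: "0 < A" and B: "0 < B" using assms by (auto simp: A_def B_def)
  have key: "c * (c + m)^2 - (c * A * B - c * A * (R - m)) = c * (R - m)^2"
    unfolding A_def B_def by (simp add: power2_eq_square algebra_simps)
  have "0 \<le> c * (R - m)^2" using assms by simp
  then have k2: "c * A * B - c * A * (R - m) \<le> c * B^2" using key unfolding B_def by linarith
  have "c / B - c / B^2 * (R - m) = (c * A * B - c * A * (R - m)) / (A * B^2)"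
    using A B by (simp add: field_simps power2_eq_square)
  also have "\<dots> \<le> c * B^2 / (A * B^2)"
    using k2 A B by (intro divide_right_mono) auto
  also have "\<dots> = c / A" using B by simp
  finally show ?thesis unfolding A_def B_def .
qed


lemma int_le_ind:
  fixes f :: "'b \<Rightarrow> real"
  assumes "prob_space P" "integrable P f" "B \<in> sets P"
    and "\<And>z. z \<in> space P \<Longrightarrow> f z \<le> K + indicator B z"
  shows "integral\<^sup>L P f \<le> K + measure P B"
proof -
  interpret prob_space P by fact
  have ii: "integrable P (indicator B :: 'b \<Rightarrow> real)"
    using assms by (intro integrable_real_indicator) (auto simp: less_top[symmetric])
  have "integral\<^sup>L P f \<le> integral\<^sup>L P (\<lambda>z. K + indicator B z)"
    using assms ii by (intro integral_mono) auto
  also have "\<dots> = K + measure P B"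
    using assms ii by (simp add: prob_space)
  finally show ?thesis .
qed

lemma int_ge_ind:
  fixes f g :: "'b \<Rightarrow> real"
  assumes "prob_space P" "integrable P f" "integrable P g" "B \<in> sets P"
    and "\<And>z. z \<in> space P \<Longrightarrow> g z - indicator B z \<le> f z"
  shows "integral\<^sup>L P g - measure P B \<le> integral\<^sup>L P f"
proof -
  interpret prob_space P by fact
  have ii: "integrable P (indicator B :: 'b \<Rightarrow> real)"
    using assms by (intro integrable_real_indicator) (auto simp: less_top[symmetric])
  have "integral\<^sup>L P (\<lambda>z. g z - indicator B z) \<le> integral\<^sup>L P f"
    using assms ii by (intro integral_mono) auto
  moreover have "integral\<^sup>L P (\<lambda>z. g z - indicator B z) = integral\<^sup>L P g - measure P B"
    using assms ii by (simp add: prob_space)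
  ultimately show ?thesis by simp
qed

lemma sum_split1: "1 \<le> N \<Longrightarrow> (\<Sum>i\<in>{1..N}. f i) = f (1::nat) + (\<Sum>i\<in>{2..N}. f i)"
proof -
  assume "1 \<le> N"
  then have "{1..N} = insert 1 {2..N}" by auto
  then show ?thesis by simp
qed

lemma lim_inv1: "(\<lambda>N::nat. 1 / (real N - 1)) \<longlonglongrightarrow> (0::real)"
proof -
  have "(\<lambda>N::nat. 1 / (real (Suc N) - 1)) \<longlonglongrightarrow> (0::real)"
    using lim_1_over_n by simp
  then show ?thesis by (rule filterlim_sequentially_Suc[THEN iffD1])
qed

lemma lim_invN: "(\<lambda>N::nat. K / ((real N - 1) * D)) \<longlonglongrightarrow> (0::real)"
proof -
  have "(\<lambda>N::nat. 1 / (real N - 1)) \<longlonglongrightarrow> (0::real)"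
  proof -
    have "(\<lambda>N::nat. 1 / (real (Suc N) - 1)) \<longlonglongrightarrow> (0::real)"
      using lim_1_over_n by simp
    then show ?thesis by (rule filterlim_sequentially_Suc[THEN iffD1])
  qed
  then have "(\<lambda>N::nat. K / D * (1 / (real N - 1))) \<longlonglongrightarrow> (0::real)"
    by (rule tendsto_mult_right_zero)
  moreover have "K / D * (1 / (real N - 1)) = K / ((real N - 1) * D)" for N
    by (simp add: divide_inverse inverse_mult_distrib mult.commute mult.left_commute)
  ultimately show ?thesis by (simp add: mult.commute)
qed

lemma obtain_right0:
  assumes "eventually P (at_right (0::real))"
  obtains d where "0 < d" "\<And>y. 0 < y \<Longrightarrow> y \<le> d \<Longrightarrow> P y"
proof -
  obtain b where b: "b > 0" "\<And>y. y > 0 \<Longrightarrow> y < b \<Longrightarrow> P y"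
    using assms unfolding eventually_at_right_field by auto
  show ?thesis by (rule that[of "b/2"]) (use b in auto)
qed

locale ctx =
  fixes M :: "'a measure" and p q :: "'a \<Rightarrow> real"
  assumes sf: "sigma_finite_measure M"
    and sing: "\<And>y. y \<in> space M \<Longrightarrow> {y} \<in> sets M"
    and pm[measurable]: "p \<in> borel_measurable M" and qm[measurable]: "q \<in> borel_measurable M"
    and p0: "\<And>y. y \<in> space M \<Longrightarrow> p y \<ge> 0"
    and q0: "\<And>y. y \<in> space M \<Longrightarrow> q y \<ge> 0"
    and pint: "(\<integral>\<^sup>+ y. ennreal (p y) \<partial>M) = 1"
    and qint: "(\<integral>\<^sup>+ y. ennreal (q y) \<partial>M) = 1"
    and pq: "\<And>y. y \<in> space M \<Longrightarrow> p y > 0 \<Longrightarrow> q y > 0"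
begin

abbreviation "Q \<equiv> density M (\<lambda>x. ennreal (q x))"
abbreviation "w \<equiv> wt M p q"

lemma Q_prob: "prob_space Q"
proof (rule prob_spaceI)
  have "emeasure Q (space Q) = (\<integral>\<^sup>+ y. ennreal (q y) * indicator (space M) y \<partial>M)"
    by (simp add: emeasure_density)
  also have "\<dots> = (\<integral>\<^sup>+ y. ennreal (q y) \<partial>M)"
    by (intro nn_integral_cong) (simp add: indicator_def)
  finally show "emeasure Q (space Q) = 1" using qint by simp
qed

sublocale Qp: Qprob Q
  by (simp add: Qprob_def Q_prob)

lemma meas_Q: "f \<in> borel_measurable M \<Longrightarrow> f \<in> borel_measurable Q"
  by simp

lemma supp_sets[measurable]: "supp_pi M p \<in> sets M"
  unfolding supp_pi_def by measurable

lemma w_meas[measurable]: "w \<in> borel_measurable M"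
  unfolding wt_def[abs_def] by measurable

lemma w_nonneg: "w y \<ge> 0"
  unfolding wt_def supp_pi_def using p0 q0 by auto

lemma w_pos: "y \<in> supp_pi M p \<Longrightarrow> w y > 0"
  unfolding wt_def supp_pi_def using pq by auto

lemma wq: "y \<in> space M \<Longrightarrow> q y * w y = p y"
  unfolding wt_def supp_pi_def using pq[of y] p0[of y] by (cases "p y > 0") auto

lemma w_int: "integrable Q w" and w_E: "Qp.expectation w = 1"
proof -
  have nn: "(\<integral>\<^sup>+ y. ennreal (w y) \<partial>Q) = 1"
  proof -
    have "(\<integral>\<^sup>+ y. ennreal (w y) \<partial>Q) = (\<integral>\<^sup>+ y. ennreal (q y) * ennreal (w y) \<partial>M)"
      by (simp add: nn_integral_density)
    also have "\<dots> = (\<integral>\<^sup>+ y. ennreal (p y) \<partial>M)"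
      using q0 w_nonneg by (intro nn_integral_cong) (simp add: ennreal_mult'[symmetric] wq)
    finally show ?thesis using pint by simp
  qed
  show "integrable Q w"
    using nn w_nonneg by (intro integrableI_nonneg) (auto simp: meas_Q)
  then show "Qp.expectation w = 1"
    using nn w_nonneg by (subst integral_eq_nn_integral) (auto simp: meas_Q)
qed

lemma trunc:
  assumes vm[measurable]: "v \<in> borel_measurable M" and vb: "\<And>y. y \<in> space M \<Longrightarrow> 0 \<le> v y \<and> v y \<le> 1"
  shows "(\<lambda>k::nat. Qp.expectation (\<lambda>y. min (w y) (real k) * v y)) \<longlonglongrightarrow> Qp.expectation (\<lambda>y. w y * v y)"
proof (rule integral_dominated_convergence[where w=w])
  show "integrable Q w" by (rule w_int)
  show "AE y in Q. (\<lambda>k. min (w y) (real k) * v y) \<longlonglongrightarrow> w y * v y"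
  proof (intro AE_I2 tendsto_eventually)
    fix y
    obtain n :: nat where "w y \<le> real n" using real_arch_simple by blast
    then show "\<forall>\<^sub>F k in sequentially. min (w y) (real k) * v y = w y * v y"
      unfolding eventually_sequentially by (intro exI[of _ n]) auto
  qed
  show "AE y in Q. norm (min (w y) (real k) * v y) \<le> w y" for k
  proof (intro AE_I2)
    fix y assume "y \<in> space Q"
    then have "0 \<le> v y" "v y \<le> 1" using vb by auto
    moreover have "0 \<le> min (w y) (real k)" "min (w y) (real k) \<le> w y" using w_nonneg[of y] by auto
    ultimately show "norm (min (w y) (real k) * v y) \<le> w y"
      using mult_mono[of "min (w y) (real k)" "w y" "v y" 1] w_nonneg[of y] by (simp add: abs_mult)
  qed
qed simp_all

lemma eps_rw:
  assumes "1 \<le> N"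
  shows "eps_pt M p q N y = integral\<^sup>L (PiM {2..N} (\<lambda>_. Q)) (\<lambda>z. w y / (w y + (\<Sum>i\<in>{2..N}. w (z i))))"
  unfolding eps_pt_def prop_prod_def Let_def
proof (intro Bochner_Integration.integral_cong refl)
  fix z :: "nat \<Rightarrow> 'a"
  have "(\<Sum>i\<in>{2..N}. w ((z(1 := y)) i)) = (\<Sum>i\<in>{2..N}. w (z i))"
    by (intro sum.cong) auto
  then show "w y / (\<Sum>i = 1..N. w ((z(1 := y)) i)) = w y / (w y + (\<Sum>i\<in>{2..N}. w (z i)))"
  proof -
    have "(\<Sum>i = 1..N. w ((z(1 := y)) i)) = w ((z(1 := y)) 1) + (\<Sum>i\<in>{2..N}. w ((z(1 := y)) i))"
      by (rule sum_split1[OF assms])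
    then show ?thesis using \<open>(\<Sum>i\<in>{2..N}. w ((z(1 := y)) i)) = (\<Sum>i\<in>{2..N}. w (z i))\<close> by simp
  qed
qed

lemma w_ind: "w t * indicator {x} t = w x * indicator {x} t"
  by (simp split: split_indicator)

lemma PN_rw:
  assumes N: "1 \<le> N"
  shows "PN M p q N x {x} = integral\<^sup>L (PiM {2..N} (\<lambda>_. Q))
    (\<lambda>z. w x * (1 + (\<Sum>i\<in>{2..N}. indicator {x} (z i))) /
         (w x * (1 + (\<Sum>i\<in>{2..N}. indicator {x} (z i))) + (\<Sum>i\<in>{2..N}. w (z i) * (1 - indicator {x} (z i)))))"
  unfolding PN_def prop_prod_def Let_def
proof (intro Bochner_Integration.integral_cong refl)
  fix z :: "nat \<Rightarrow> 'a"
  define z' where "z' = z(1 := x)"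
  define C where "C = (\<Sum>i\<in>{2..N}. indicator {x} (z i) :: real)"
  define R where "R = (\<Sum>i\<in>{2..N}. w (z i) * (1 - indicator {x} (z i)))"
  have z'2: "(\<Sum>i\<in>{2..N}. f (z' i)) = (\<Sum>i\<in>{2..N}. f (z i))" for f :: "'a \<Rightarrow> real"
    unfolding z'_def by (intro sum.cong) auto
  have D: "(\<Sum>j\<in>{1..N}. w (z' j)) = w x * (1 + C) + R"
  proof -
    have "(\<Sum>j\<in>{1..N}. w (z' j)) = w x + (\<Sum>i\<in>{2..N}. w (z i))"
      using sum_split1[OF N, of "\<lambda>j. w (z' j)"] z'2[of w] by (simp add: z'_def)
    also have "(\<Sum>i\<in>{2..N}. w (z i)) = (\<Sum>i\<in>{2..N}. w x * indicator {x} (z i) + w (z i) * (1 - indicator {x} (z i)))"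
      by (intro sum.cong refl) (simp split: split_indicator)
    also have "\<dots> = w x * C + R"
      unfolding C_def R_def by (simp add: sum.distrib sum_distrib_left)
    finally show ?thesis by (simp add: algebra_simps)
  qed
  have Nm: "(\<Sum>i\<in>{1..N}. w (z' i) * indicator {x} (z' i)) = w x * (1 + C)"
  proof -
    have "(\<Sum>i\<in>{1..N}. w (z' i) * indicator {x} (z' i)) = w x + (\<Sum>i\<in>{2..N}. w (z i) * indicator {x} (z i))"
      using sum_split1[OF N, of "\<lambda>j. w (z' j) * indicator {x} (z' j)"] z'2[of "\<lambda>t. w t * indicator {x} t"]
      by (simp add: z'_def)
    also have "(\<Sum>i\<in>{2..N}. w (z i) * indicator {x} (z i)) = w x * C"
      unfolding C_def sum_distrib_left using w_ind by simp
    finally show ?thesis by (simp add: algebra_simps)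
  qed
  have "(\<Sum>i\<in>{1..N}. w (z' i) / (\<Sum>j\<in>{1..N}. w (z' j)) * indicator {x} (z' i))
      = (\<Sum>i\<in>{1..N}. w (z' i) * indicator {x} (z' i)) / (\<Sum>j\<in>{1..N}. w (z' j))"
    by (subst sum_divide_distrib) (intro sum.cong refl; simp)
  also have "\<dots> = w x * (1 + C) / (w x * (1 + C) + R)"
    using D Nm by simp
  finally show "(\<Sum>i\<in>{1..N}. w (z' i) / (\<Sum>j\<in>{1..N}. w (z' j)) * indicator {x} (z' i)) =
     w x * (1 + C) / (w x * (1 + C) + R)" .
qed

lemma card_I: "real (card {2..N}) = real N - 1" if "2 \<le> N"
  using that by simp

lemma eps_bound:
  fixes c m1 :: real
  assumes c: "0 \<le> c" and m1def: "m1 = Qp.expectation (\<lambda>t. min (w t) c)" and m1: "0 < m1"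
    and b: "0 < w y" and N: "2 \<le> N"
  shows "eps_pt M p q N y \<le> 2 * w y / ((real N - 1) * m1) + 16 * c^2 / ((real N - 1) * m1^2)"
proof -
  define I where "I = {2..N}"
  define P where "P = PiM I (\<lambda>_. Q)"
  define n where "n = real N - 1"
  define b where "b = w y"
  have n: "n \<ge> 1" using N unfolding n_def by simp
  have cardI: "real (card I) = n" unfolding I_def n_def using N by simp
  interpret P: prob_space P unfolding P_def by (rule Qp.PP_prob)
  define g where "g t = min (w t) c" for t
  have gm[measurable]: "g \<in> borel_measurable M" unfolding g_def[abs_def] by measurable
  have gb: "\<bar>g t\<bar> \<le> c" for t unfolding g_def using w_nonneg[of t] c by auto
  define Bad where "Bad = {z \<in> space P. n * m1 / 2 \<le> \<bar>(\<Sum>i\<in>I. g (z i)) - real (card I) * Qp.expectation g\<bar>}"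
  have Bad_sets: "Bad \<in> sets P" unfolding Bad_def P_def I_def by measurable
  have mBad: "measure P Bad \<le> real (card I) * (2*c)^2 / (n * m1 / 2)^2"
    unfolding Bad_def P_def
    by (rule Qp.cheb) (use gb n m1 in \<open>auto simp: I_def\<close>)
  also have "\<dots> = 16 * c^2 / (n * m1^2)"
    using n m1 unfolding cardI by (simp add: field_simps power2_eq_square)
  finally have mBad': "measure P Bad \<le> 16 * c^2 / (n * m1^2)" .
  define f where "f z = b / (b + (\<Sum>i\<in>I. w (z i)))" for z
  have fm[measurable]: "f \<in> borel_measurable P" unfolding f_def[abs_def] P_def I_def by measurable
  have f01: "0 \<le> f z \<and> f z \<le> 1" for z
  proof -
    have "0 \<le> (\<Sum>i\<in>I. w (z i))" by (intro sum_nonneg w_nonneg)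
    then show ?thesis using b unfolding f_def b_def by auto
  qed
  have fint: "integrable P f"
    by (rule P.integrable_const_bound[where B=1]) (use f01 in auto)
  have fb: "f z \<le> 2 * b / (n * m1) + indicator Bad z" if z: "z \<in> space P" for z
  proof (cases "z \<in> Bad")
    case True
    have "0 \<le> 2 * b / (n * m1)" using b n m1 unfolding b_def by simp
    then show ?thesis using True f01[of z] by simp
  next
    case False
    then have "\<bar>(\<Sum>i\<in>I. g (z i)) - n * m1\<bar> < n * m1 / 2"
      using z unfolding Bad_def cardI m1def g_def[abs_def] by auto
    then have lo: "n * m1 / 2 < (\<Sum>i\<in>I. g (z i))" by linarith
    have "(\<Sum>i\<in>I. g (z i)) \<le> (\<Sum>i\<in>I. w (z i))"
      by (intro sum_mono) (simp add: g_def)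
    then have S: "n * m1 / 2 \<le> b + (\<Sum>i\<in>I. w (z i))" using lo b unfolding b_def by linarith
    have pos: "0 < n * m1 / 2" using n m1 by simp
    have "f z \<le> b / (n * m1 / 2)"
      unfolding f_def using S b pos unfolding b_def
      by (intro divide_left_mono) (auto intro: mult_pos_pos)
    also have "\<dots> = 2 * b / (n * m1)" by simp
    finally show ?thesis using False by simp
  qed
  have "eps_pt M p q N y = integral\<^sup>L P f"
    using N eps_rw[of N y] unfolding P_def I_def f_def b_def by simp
  also have "\<dots> \<le> 2 * b / (n * m1) + measure P Bad"
    by (rule int_le_ind[OF _ fint Bad_sets fb]) (rule P.prob_space_axioms)
  also have "\<dots> \<le> 2 * b / (n * m1) + 16 * c^2 / (n * m1^2)"
    using mBad' by simp
  finally show ?thesis unfolding n_def b_def .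
qed

lemma PN_upper:
  fixes c \<delta> mc :: real
  assumes x: "x \<in> supp_pi M p" and c: "0 \<le> c" and \<delta>: "0 < \<delta>"
    and mcdef: "mc = Qp.expectation (\<lambda>t. min (w t) c * (1 - indicator {x} t))"
    and N: "2 \<le> N"
  shows "PN M p q N x {x} \<le>
    w x * (1 / (real N - 1) + measure Q {x} + \<delta>) / (w x * (1 / (real N - 1) + measure Q {x} + \<delta>) + max 0 (mc - \<delta>))
    + (4 + 4 * c^2) / ((real N - 1) * \<delta>^2)"
proof -
  define I where "I = {2..N}"
  define P where "P = PiM I (\<lambda>_. Q)"
  define n where "n = real N - 1"
  define a where "a = w x"
  define r where "r = measure Q {x}"
  have a: "0 < a" unfolding a_def using w_pos[OF x] .
  have xM: "x \<in> space M" using x unfolding supp_pi_def by auto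
  have xs[measurable]: "{x} \<in> sets M" using sing[OF xM] .
  have n: "n \<ge> 1" using N unfolding n_def by simp
  have cardI: "real (card I) = n" unfolding I_def n_def using N by simp
  interpret P: prob_space P unfolding P_def by (rule Qp.PP_prob)
  define g1 where "g1 t = (indicator {x} t :: real)" for t
  define g2 where "g2 t = min (w t) c * (1 - indicator {x} t)" for t
  have g1m[measurable]: "g1 \<in> borel_measurable M" unfolding g1_def[abs_def] by measurable
  have g2m[measurable]: "g2 \<in> borel_measurable M" unfolding g2_def[abs_def] by measurable
  have g1b: "\<bar>g1 t\<bar> \<le> 1" for t unfolding g1_def by (simp split: split_indicator)
  have g2b: "\<bar>g2 t\<bar> \<le> c" for t unfolding g2_def using w_nonneg[of t] c by (auto split: split_indicator)
  have Eg1: "Qp.expectation g1 = r" unfolding g1_def[abs_def] r_def by simp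
  have Eg2: "Qp.expectation g2 = mc" unfolding g2_def[abs_def] mcdef by simp
  define C where "C z = (\<Sum>i\<in>I. g1 (z i))" for z
  define Rc where "Rc z = (\<Sum>i\<in>I. g2 (z i))" for z
  define R where "R z = (\<Sum>i\<in>I. w (z i) * (1 - indicator {x} (z i)))" for z
  define Bad1 where "Bad1 = {z \<in> space P. n * \<delta> \<le> \<bar>(\<Sum>i\<in>I. g1 (z i)) - real (card I) * Qp.expectation g1\<bar>}"
  define Bad2 where "Bad2 = {z \<in> space P. n * \<delta> \<le> \<bar>(\<Sum>i\<in>I. g2 (z i)) - real (card I) * Qp.expectation g2\<bar>}"
  have B1s: "Bad1 \<in> sets P" unfolding Bad1_def P_def I_def by measurable
  have B2s: "Bad2 \<in> sets P" unfolding Bad2_def P_def I_def by measurable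
  have nd: "0 < n * \<delta>" using n \<delta> by simp
  have m1: "measure P Bad1 \<le> real (card I) * (2*1)^2 / (n * \<delta>)^2"
    unfolding Bad1_def P_def by (rule Qp.cheb) (use g1b nd in \<open>auto simp: I_def\<close>)
  have m2: "measure P Bad2 \<le> real (card I) * (2*c)^2 / (n * \<delta>)^2"
    unfolding Bad2_def P_def by (rule Qp.cheb) (use g2b nd in \<open>auto simp: I_def\<close>)
  have "measure P (Bad1 \<union> Bad2) \<le> measure P Bad1 + measure P Bad2"
    by (rule measure_Un_le[OF B1s B2s])
  also have "\<dots> \<le> real (card I) * (2*1)^2 / (n * \<delta>)^2 + real (card I) * (2*c)^2 / (n * \<delta>)^2"
    using m1 m2 by linarith
  also have "\<dots> = (4 + 4 * c^2) / (n * \<delta>^2)"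
    using n \<delta> unfolding cardI by (simp add: field_simps power2_eq_square)
  finally have mB: "measure P (Bad1 \<union> Bad2) \<le> (4 + 4 * c^2) / (n * \<delta>^2)" .
  define f where "f z = a * (1 + C z) / (a * (1 + C z) + R z)" for z
  have fm[measurable]: "f \<in> borel_measurable P"
    unfolding f_def[abs_def] C_def[abs_def] R_def[abs_def] P_def I_def by measurable
  have C0: "0 \<le> C z" for z unfolding C_def g1_def by (intro sum_nonneg) simp
  have R0: "0 \<le> R z" for z unfolding R_def using w_nonneg by (intro sum_nonneg) (simp split: split_indicator)
  have f01: "0 \<le> f z \<and> f z \<le> 1" for z
  proof -
    have "0 < a * (1 + C z)" using C0[of z] a by simp
    then show ?thesis using R0[of z] unfolding f_def by (auto simp: divide_simps)
  qed
  have fint: "integrable P f"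
    by (rule P.integrable_const_bound[where B=1]) (use f01 in auto)
  define U where "U = a * (1 + n * (r + \<delta>)) / (a * (1 + n * (r + \<delta>)) + n * max 0 (mc - \<delta>))"
  have fb: "f z \<le> U + indicator (Bad1 \<union> Bad2) z" if z: "z \<in> space P" for z
  proof (cases "z \<in> Bad1 \<union> Bad2")
    case True
    have "0 \<le> U" unfolding U_def using a n \<delta> w_nonneg Eg1 r_def by (auto intro!: divide_nonneg_nonneg)
    then show ?thesis using True f01[of z] by simp
  next
    case False
    then have "\<bar>C z - n * r\<bar> < n * \<delta>" "\<bar>Rc z - n * mc\<bar> < n * \<delta>"
      using z unfolding Bad1_def Bad2_def cardI Eg1 Eg2 C_def Rc_def by auto
    then have Cu: "C z \<le> n * (r + \<delta>)" and Rl: "n * (mc - \<delta>) \<le> Rc z"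
      by (auto simp: algebra_simps)
    have "Rc z \<le> R z" unfolding Rc_def R_def g2_def
      by (intro sum_mono mult_right_mono) (auto split: split_indicator)
    then have RR: "n * max 0 (mc - \<delta>) \<le> R z" using Rl R0[of z] n by (auto simp: max_def)
    have "f z \<le> U" unfolding f_def U_def
    proof (rule mono_frac)
      show "0 < a * (1 + C z)" using a C0[of z] by simp
      show "a * (1 + C z) \<le> a * (1 + n * (r + \<delta>))" using a Cu by simp
      show "0 \<le> n * max 0 (mc - \<delta>)" using n by simp
    qed (rule RR)
    then show ?thesis using False by simp
  qed
  have "PN M p q N x {x} = integral\<^sup>L P f"
    using PN_rw[of N x] N unfolding P_def I_def f_def a_def C_def R_def g1_def by simp
  also have "\<dots> \<le> U + measure P (Bad1 \<union> Bad2)"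
    by (rule int_le_ind[OF _ fint _ fb]) (use B1s B2s P.prob_space_axioms in auto)
  also have "\<dots> \<le> U + (4 + 4 * c^2) / (n * \<delta>^2)" using mB by simp
  also have "U = a * (1 / n + r + \<delta>) / (a * (1 / n + r + \<delta>) + max 0 (mc - \<delta>))"
  proof -
    have "U = (n * (a * (1 / n + r + \<delta>))) / (n * (a * (1 / n + r + \<delta>) + max 0 (mc - \<delta>)))"
      unfolding U_def using n by (simp add: algebra_simps)
    also have "\<dots> = a * (1 / n + r + \<delta>) / (a * (1 / n + r + \<delta>) + max 0 (mc - \<delta>))"
      using n by (intro mult_divide_mult_cancel_left) simp
    finally show ?thesis .
  qed
  finally show ?thesis unfolding n_def a_def r_def .
qed

lemma PN_lower:
  fixes \<delta> s :: real
  assumes x: "x \<in> supp_pi M p" and \<delta>: "0 < \<delta>" "\<delta> < measure Q {x}"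
    and sdef: "s = Qp.expectation (\<lambda>t. w t * (1 - indicator {x} t))"
    and N: "2 \<le> N"
  shows "w x * (measure Q {x} - \<delta>) / (w x * (measure Q {x} - \<delta>) + s) - 4 / ((real N - 1) * \<delta>^2)
         \<le> PN M p q N x {x}"
proof -
  define I where "I = {2..N}"
  define P where "P = PiM I (\<lambda>_. Q)"
  define n where "n = real N - 1"
  define a where "a = w x"
  define r where "r = measure Q {x}"
  have a: "0 < a" unfolding a_def using w_pos[OF x] .
  have xM: "x \<in> space M" using x unfolding supp_pi_def by auto
  have xs[measurable]: "{x} \<in> sets M" using sing[OF xM] .
  have n: "n \<ge> 1" using N unfolding n_def by simp
  have cardI: "real (card I) = n" unfolding I_def n_def using N by simp
  have finI: "finite I" unfolding I_def by simp
  interpret P: prob_space P unfolding P_def by (rule Qp.PP_prob)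
  define g1 where "g1 t = (indicator {x} t :: real)" for t
  define h where "h t = w t * (1 - indicator {x} t)" for t
  have g1m[measurable]: "g1 \<in> borel_measurable M" unfolding g1_def[abs_def] by measurable
  have hm[measurable]: "h \<in> borel_measurable M" unfolding h_def[abs_def] by measurable
  have g1b: "\<bar>g1 t\<bar> \<le> 1" for t unfolding g1_def by (simp split: split_indicator)
  have Eg1: "Qp.expectation g1 = r" unfolding g1_def[abs_def] r_def by simp
  have hint: "integrable Q h"
  proof -
    have "integrable Q (\<lambda>t. w t - w t * indicator {x} t)"
      using w_int by (intro Bochner_Integration.integrable_diff integrable_real_mult_indicator) auto
    then show ?thesis unfolding h_def[abs_def] by (simp add: right_diff_distrib)
  qed
  have Eh: "Qp.expectation h = s" unfolding h_def[abs_def] sdef by simp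
  have s0: "0 \<le> s" unfolding sdef using w_nonneg
    by (intro Bochner_Integration.integral_nonneg) (simp split: split_indicator)
  define C where "C z = (\<Sum>i\<in>I. g1 (z i))" for z
  define R where "R z = (\<Sum>i\<in>I. h (z i))" for z
  define Bad1 where "Bad1 = {z \<in> space P. n * \<delta> \<le> \<bar>(\<Sum>i\<in>I. g1 (z i)) - real (card I) * Qp.expectation g1\<bar>}"
  have B1s: "Bad1 \<in> sets P" unfolding Bad1_def P_def I_def by measurable
  have nd: "0 < n * \<delta>" using n \<delta> by simp
  have m1: "measure P Bad1 \<le> real (card I) * (2*1)^2 / (n * \<delta>)^2"
    unfolding Bad1_def P_def by (rule Qp.cheb) (use g1b nd in \<open>auto simp: I_def\<close>)
  also have "\<dots> = 4 / (n * \<delta>^2)"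
    using n \<delta> unfolding cardI by (simp add: field_simps power2_eq_square)
  finally have mB: "measure P Bad1 \<le> 4 / (n * \<delta>^2)" .
  define f where "f z = a * (1 + C z) / (a * (1 + C z) + R z)" for z
  have fm[measurable]: "f \<in> borel_measurable P"
    unfolding f_def[abs_def] C_def[abs_def] R_def[abs_def] P_def I_def by measurable
  have C0: "0 \<le> C z" for z unfolding C_def g1_def by (intro sum_nonneg) simp
  have R0: "0 \<le> R z" for z unfolding R_def h_def using w_nonneg by (intro sum_nonneg) (simp split: split_indicator)
  have f01: "0 \<le> f z \<and> f z \<le> 1" for z
  proof -
    have "0 < a * (1 + C z)" using C0[of z] a by simp
    then show ?thesis using R0[of z] unfolding f_def by (auto simp: divide_simps)
  qed
  have fint: "integrable P f"
    by (rule P.integrable_const_bound[where B=1]) (use f01 in auto)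
  define k0 where "k0 = n * (r - \<delta>)"
  define c0 where "c0 = a * k0"
  define m where "m = n * s"
  have k0: "0 < k0" unfolding k0_def using n \<delta> r_def by simp
  have c0: "0 < c0" unfolding c0_def using a k0 by simp
  have m0: "0 \<le> m" unfolding m_def using n s0 by simp
  define hh where "hh z = c0 / (c0 + R z)" for z
  have hhm[measurable]: "hh \<in> borel_measurable P"
    unfolding hh_def[abs_def] R_def[abs_def] P_def I_def by measurable
  have hh01: "0 \<le> hh z \<and> hh z \<le> 1" for z
    using c0 R0[of z] unfolding hh_def by (auto simp: divide_simps)
  have hhint: "integrable P hh"
    by (rule P.integrable_const_bound[where B=1]) (use hh01 in auto)
  have Rint: "integrable P R"
    unfolding R_def P_def
    by (intro Bochner_Integration.integrable_sum Qp.comp_int(2) hint) (auto simp: I_def)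
  have ER: "integral\<^sup>L P R = m"
  proof -
    have "integral\<^sup>L P R = (\<Sum>i\<in>I. integral\<^sup>L P (\<lambda>z. h (z i)))"
      unfolding R_def P_def
      by (intro Bochner_Integration.integral_sum Qp.comp_int(2) hint) (auto simp: I_def)
    also have "\<dots> = (\<Sum>i\<in>I. s)"
      unfolding P_def using Qp.comp_int(1)[of _ I h] Eh by (intro sum.cong refl) auto
    also have "\<dots> = m" unfolding m_def using cardI by simp
    finally show ?thesis .
  qed
  have Ehh: "c0 / (c0 + m) \<le> integral\<^sup>L P hh"
  proof -
    have "integral\<^sup>L P (\<lambda>z. c0 / (c0 + m) - c0 / (c0 + m)^2 * (R z - m)) \<le> integral\<^sup>L P hh"
    proof (rule Bochner_Integration.integral_mono)
      show "integrable P (\<lambda>z. c0 / (c0 + m) - c0 / (c0 + m)^2 * (R z - m))"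
        using Rint by simp
      show "c0 / (c0 + m) - c0 / (c0 + m)^2 * (R z - m) \<le> hh z" for z
        unfolding hh_def by (rule tangent[OF c0 R0 m0])
    qed (rule hhint)
    moreover have "integral\<^sup>L P (\<lambda>z. c0 / (c0 + m) - c0 / (c0 + m)^2 * (R z - m)) = c0 / (c0 + m)"
      using Rint ER by (simp add: P.prob_space)
    ultimately show ?thesis by simp
  qed
  have fb: "hh z - indicator Bad1 z \<le> f z" if z: "z \<in> space P" for z
  proof (cases "z \<in> Bad1")
    case True
    then show ?thesis using hh01[of z] f01[of z] by simp
  next
    case False
    then have "\<bar>C z - n * r\<bar> < n * \<delta>"
      using z unfolding Bad1_def cardI Eg1 C_def by auto
    then have Cl: "k0 \<le> 1 + C z" unfolding k0_def by (auto simp: algebra_simps)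
    have "hh z \<le> f z" unfolding hh_def f_def
    proof (rule mono_frac)
      show "c0 \<le> a * (1 + C z)" unfolding c0_def using a Cl by simp
    qed (use c0 R0 in auto)
    then show ?thesis using False by simp
  qed
  have "integral\<^sup>L P hh - measure P Bad1 \<le> integral\<^sup>L P f"
    by (rule int_ge_ind[OF P.prob_space_axioms fint hhint B1s fb])
  moreover have "PN M p q N x {x} = integral\<^sup>L P f"
    using PN_rw[of N x] N unfolding P_def I_def f_def a_def C_def R_def g1_def h_def by simp
  moreover have "c0 / (c0 + m) = a * (r - \<delta>) / (a * (r - \<delta>) + s)"
  proof -
    have "c0 / (c0 + m) = (n * (a * (r - \<delta>))) / (n * (a * (r - \<delta>) + s))"
      unfolding c0_def k0_def m_def by (simp add: algebra_simps)
    also have "\<dots> = a * (r - \<delta>) / (a * (r - \<delta>) + s)"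
      using n by (intro mult_divide_mult_cancel_left) simp
    finally show ?thesis .
  qed
  ultimately show ?thesis using Ehh mB unfolding n_def a_def r_def by linarith
qed

lemma eps_nonneg: "0 \<le> eps_pt M p q N y"
  unfolding eps_pt_def Let_def
  by (intro Bochner_Integration.integral_nonneg divide_nonneg_nonneg sum_nonneg w_nonneg)

lemma PN_nonneg: "0 \<le> PN M p q N y A"
  unfolding PN_def Let_def
  by (intro Bochner_Integration.integral_nonneg divide_nonneg_nonneg sum_nonneg w_nonneg mult_nonneg_nonneg)
     (auto simp: w_nonneg)

lemma eps_le1:
  assumes "0 < w y" "1 \<le> N"
  shows "eps_pt M p q N y \<le> 1"
proof -
  interpret P: prob_space "PiM {2..N} (\<lambda>_. Q)" by (rule Qp.PP_prob)
  have b: "0 \<le> w y / (w y + (\<Sum>i\<in>{2..N}. w (z i))) \<and> w y / (w y + (\<Sum>i\<in>{2..N}. w (z i))) \<le> 1" for z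
  proof -
    have "0 \<le> (\<Sum>i\<in>{2..N}. w (z i))" by (intro sum_nonneg w_nonneg)
    then show ?thesis using assms by auto
  qed
  have "integral\<^sup>L (PiM {2..N} (\<lambda>_. Q)) (\<lambda>z. w y / (w y + (\<Sum>i\<in>{2..N}. w (z i))))
      \<le> integral\<^sup>L (PiM {2..N} (\<lambda>_. Q)) (\<lambda>z. 1)"
  proof (rule Bochner_Integration.integral_mono)
    show "integrable (PiM {2..N} (\<lambda>_. Q)) (\<lambda>z. w y / (w y + (\<Sum>i\<in>{2..N}. w (z i))))"
    proof (rule P.integrable_const_bound[where B=1])
      show "AE z in PiM {2..N} (\<lambda>_. Q). norm (w y / (w y + (\<Sum>i\<in>{2..N}. w (z i)))) \<le> 1"
      proof (rule AE_I2)
        fix z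
        show "norm (w y / (w y + (\<Sum>i\<in>{2..N}. w (z i)))) \<le> 1"
          using b[of z] by (simp only: real_norm_def abs_of_nonneg)
      qed
    qed simp
  qed (use b in auto)
  then show ?thesis using eps_rw[OF assms(2), of y] by (simp add: P.prob_space)
qed

lemma pi_prob: "prob_space (density M (\<lambda>x. ennreal (p x)))"
proof (rule prob_spaceI)
  have "emeasure (density M (\<lambda>x. ennreal (p x))) (space M) = (\<integral>\<^sup>+ y. ennreal (p y) * indicator (space M) y \<partial>M)"
    by (simp add: emeasure_density)
  also have "\<dots> = (\<integral>\<^sup>+ y. ennreal (p y) \<partial>M)"
    by (intro nn_integral_cong) (simp add: indicator_def)
  finally show "emeasure (density M (\<lambda>x. ennreal (p x))) (space (density M (\<lambda>x. ennreal (p x)))) = 1"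
    using pint by simp
qed

lemma point_mass:
  assumes x: "x \<in> supp_pi M p"
  shows "Qp.expectation (\<lambda>t. w t * indicator {x} t) = w x * measure Q {x}"
    and "Qp.expectation (\<lambda>t. w t * (1 - indicator {x} t)) = 1 - w x * measure Q {x}"
    and "measure (density M (\<lambda>y. ennreal (p y))) {x} = w x * measure Q {x}"
proof -
  have xM: "x \<in> space M" using x unfolding supp_pi_def by auto
  have xs[measurable]: "{x} \<in> sets M" using sing[OF xM] .
  show e1: "Qp.expectation (\<lambda>t. w t * indicator {x} t) = w x * measure Q {x}"
  proof -
    have "(\<lambda>t. w t * indicator {x} t) = (\<lambda>t. w x * indicator {x} t)"
      by (rule ext) (rule w_ind)
    then show ?thesis by simp
  qed
  have ii: "integrable Q (\<lambda>t. w t * indicator {x} t)"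
    using w_int by (intro integrable_real_mult_indicator) auto
  have "Qp.expectation (\<lambda>t. w t * (1 - indicator {x} t)) = Qp.expectation (\<lambda>t. w t - w t * indicator {x} t)"
    by (simp add: right_diff_distrib)
  also have "\<dots> = 1 - w x * measure Q {x}"
    using w_int ii e1 w_E by simp
  finally show "Qp.expectation (\<lambda>t. w t * (1 - indicator {x} t)) = 1 - w x * measure Q {x}" .
  have px: "0 < p x" "0 < q x" using x pq unfolding supp_pi_def by auto
  have em: "emeasure (density M f) {x} = ennreal (f x) * emeasure M {x}" if "f \<in> borel_measurable M" for f :: "'a \<Rightarrow> real"
  proof -
    have "emeasure (density M f) {x} = (\<integral>\<^sup>+ y. ennreal (f y) * indicator {x} y \<partial>M)"
      using that by (simp add: emeasure_density)
    also have "\<dots> = (\<integral>\<^sup>+ y. ennreal (f x) * indicator {x} y \<partial>M)"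
      by (intro nn_integral_cong) (simp split: split_indicator)
    also have "\<dots> = ennreal (f x) * emeasure M {x}"
      by (simp add: nn_integral_cmult_indicator)
    finally show ?thesis .
  qed
  interpret Pi: prob_space "density M (\<lambda>x. ennreal (p x))" by (rule pi_prob)
  have "ennreal (p x) * emeasure M {x} \<le> 1"
    using em[of p] Pi.emeasure_le_1[of "{x}"] by simp
  then have fin: "emeasure M {x} \<noteq> \<infinity>"
    using px by (auto simp: ennreal_mult_eq_top_iff top_unique)
  then have emx: "emeasure M {x} = ennreal (measure M {x})" by (metis emeasure_eq_ennreal_measure infinity_ennreal_def)
  have mp: "measure (density M (\<lambda>y. ennreal (p y))) {x} = p x * measure M {x}"
    unfolding measure_def using em[of p] emx px by (simp add: ennreal_mult'[symmetric])
  have mq: "measure Q {x} = q x * measure M {x}"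
    unfolding measure_def using em[of q] emx px by (simp add: ennreal_mult'[symmetric])
  have wx: "w x = p x / q x" using x unfolding wt_def by simp
  show "measure (density M (\<lambda>y. ennreal (p y))) {x} = w x * measure Q {x}"
    using mp mq wx px by simp
qed

lemma PN_lim:
  assumes x: "x \<in> supp_pi M p"
  shows "(\<lambda>N. PN M p q N x {x}) \<longlonglongrightarrow> w x * measure Q {x}"
proof -
  define a where "a = w x"
  define r where "r = measure Q {x}"
  define L where "L = a * r"
  define s where "s = Qp.expectation (\<lambda>t. w t * (1 - indicator {x} t))"
  have a: "0 < a" unfolding a_def using w_pos[OF x] .
  have r0: "0 \<le> r" unfolding r_def by simp
  have xM: "x \<in> space M" using x unfolding supp_pi_def by auto
  have xs[measurable]: "{x} \<in> sets M" using sing[OF xM] .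
  have s_eq: "s = 1 - a * r" unfolding s_def a_def r_def by (rule point_mass(2)[OF x])
  have s0: "0 \<le> s" unfolding s_def using w_nonneg
    by (intro Bochner_Integration.integral_nonneg) (simp split: split_indicator)
  show ?thesis
    unfolding a_def[symmetric] r_def[symmetric]
  proof (rule order_tendstoI)
    fix u assume u: "a * r < u"
    define \<epsilon> where "\<epsilon> = u - a * r"
    have \<epsilon>: "0 < \<epsilon>" using u unfolding \<epsilon>_def by simp
    define F where "F d = a * (r + d) / (a * (r + d) + max 0 (s - 2 * d))" for d :: real
    have "(F \<longlongrightarrow> a * (r + 0) / (a * (r + 0) + max 0 (s - 2 * 0))) (at_right 0)"
      unfolding F_def using s_eq a r0 s0 by (intro tendsto_intros) auto
    moreover have "a * (r + 0) / (a * (r + 0) + max 0 (s - 2 * 0)) = a * r"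
      using s_eq s0 by simp
    ultimately have "(F \<longlongrightarrow> a * r) (at_right 0)" by simp
    then have "eventually (\<lambda>d. F d < a * r + \<epsilon> / 2) (at_right 0)"
      using \<epsilon> by (intro order_tendstoD(2)) auto
    then obtain d0 where d0: "0 < d0" "\<And>d. 0 < d \<Longrightarrow> d \<le> d0 \<Longrightarrow> F d < a * r + \<epsilon> / 2"
      by (rule obtain_right0) blast
    define \<delta> where "\<delta> = d0"
    have \<delta>: "0 < \<delta>" "F \<delta> < a * r + \<epsilon> / 2" using d0 unfolding \<delta>_def by auto
    have "(\<lambda>k::nat. Qp.expectation (\<lambda>y. min (w y) (real k) * (1 - indicator {x} y))) \<longlonglongrightarrow> s"
      unfolding s_def by (rule trunc) (auto split: split_indicator)
    then have "eventually (\<lambda>k. s - \<delta> < Qp.expectation (\<lambda>y. min (w y) (real k) * (1 - indicator {x} y))) sequentially"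
      using \<delta> by (intro order_tendstoD(1)) auto
    then obtain k :: nat where k: "s - \<delta> < Qp.expectation (\<lambda>y. min (w y) (real k) * (1 - indicator {x} y))"
      unfolding eventually_sequentially by auto
    define mc where "mc = Qp.expectation (\<lambda>y. min (w y) (real k) * (1 - indicator {x} y))"
    define G where "G N = a * (1 / (real N - 1) + r + \<delta>) / (a * (1 / (real N - 1) + r + \<delta>) + max 0 (mc - \<delta>))
        + (4 + 4 * (real k)^2) / ((real N - 1) * \<delta>^2)" for N :: nat
    have "(\<lambda>N::nat. 1 / (real N - 1)) \<longlonglongrightarrow> 0" using lim_invN[of 1 1] by simp
    define Gl where "Gl = a * (0 + r + \<delta>) / (a * (0 + r + \<delta>) + max 0 (mc - \<delta>)) + 0"
    have Glim: "G \<longlonglongrightarrow> Gl"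
      unfolding G_def Gl_def
    proof (intro tendsto_intros lim_invN)
      have "0 < a * (0 + r + \<delta>)" using a r0 \<delta> by simp
      then show "a * (0 + r + \<delta>) + max 0 (mc - \<delta>) \<noteq> 0" by (smt (verit))
    qed (rule lim_inv1)+
    have "Gl \<le> F \<delta>"
      unfolding F_def Gl_def using a r0 \<delta> k unfolding mc_def[symmetric]
      by simp (intro mono_frac, auto)
    moreover have "F \<delta> < u"
    proof -
      have h1: "a * r + \<epsilon> / 2 < u" using u unfolding \<epsilon>_def by (simp add: field_simps)
      show ?thesis by (rule less_trans[OF \<delta>(2) h1])
    qed
    ultimately have "Gl < u" by linarith
    then have "eventually (\<lambda>N. G N < u) sequentially"
      by (rule order_tendstoD(2)[OF Glim])
    moreover have "eventually (\<lambda>N. PN M p q N x {x} \<le> G N) sequentially"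
      unfolding eventually_sequentially G_def a_def r_def
      by (intro exI[of _ 2] allI impI PN_upper[OF x _ \<delta>(1) mc_def]) auto
    ultimately show "eventually (\<lambda>N. PN M p q N x {x} < u) sequentially"
      by eventually_elim auto
  next
    fix l assume l: "l < a * r"
    show "eventually (\<lambda>N. l < PN M p q N x {x}) sequentially"
    proof (cases "r = 0")
      case True
      have "l < PN M p q N x {x}" for N
        using l True PN_nonneg[of N x "{x}"] by simp
      then show ?thesis by (intro always_eventually allI)
    next
      case False
      then have r: "0 < r" using r0 by simp
      define \<epsilon> where "\<epsilon> = a * r - l"
      have \<epsilon>: "0 < \<epsilon>" using l unfolding \<epsilon>_def by simp
      define F where "F d = a * (r - d) / (a * (r - d) + s)" for d :: real
      have "(F \<longlongrightarrow> a * (r - 0) / (a * (r - 0) + s)) (at_right 0)"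
        unfolding F_def using s_eq a r s0 by (intro tendsto_intros) auto
      moreover have "a * (r - 0) / (a * (r - 0) + s) = a * r"
        using s_eq by simp
      ultimately have "(F \<longlongrightarrow> a * r) (at_right 0)" by simp
      then have "eventually (\<lambda>d. a * r - \<epsilon> / 2 < F d) (at_right 0)"
        using \<epsilon> by (intro order_tendstoD(1)) auto
      then obtain d0 where d0: "0 < d0" "\<And>d. 0 < d \<Longrightarrow> d \<le> d0 \<Longrightarrow> a * r - \<epsilon> / 2 < F d"
        by (rule obtain_right0) blast
      define \<delta> where "\<delta> = min d0 (r / 2)"
      have \<delta>: "0 < \<delta>" "\<delta> < r" "a * r - \<epsilon> / 2 < F \<delta>"
        using d0 r unfolding \<delta>_def by auto
      have "(\<lambda>N. 4 / ((real N - 1) * \<delta>^2)) \<longlonglongrightarrow> 0" by (rule lim_invN)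
      then have "eventually (\<lambda>N. 4 / ((real N - 1) * \<delta>^2) < \<epsilon> / 2) sequentially"
        using \<epsilon> by (intro order_tendstoD(2)) auto
      moreover have "eventually (\<lambda>N. F \<delta> - 4 / ((real N - 1) * \<delta>^2) \<le> PN M p q N x {x}) sequentially"
        unfolding eventually_sequentially F_def a_def r_def
        by (intro exI[of _ 2] allI impI PN_lower[OF x _ _ s_def]) (use \<delta> in \<open>auto simp: r_def\<close>)
      ultimately have "eventually (\<lambda>N. 4 / ((real N - 1) * \<delta>^2) < \<epsilon> / 2 \<and>
          F \<delta> - 4 / ((real N - 1) * \<delta>^2) \<le> PN M p q N x {x}) sequentially"
        by (rule eventually_conj)
      then show ?thesis
      proof (rule eventually_mono)
        fix N assume "4 / ((real N - 1) * \<delta>^2) < \<epsilon> / 2 \<and>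
          F \<delta> - 4 / ((real N - 1) * \<delta>^2) \<le> PN M p q N x {x}"
        moreover have "\<epsilon> / 2 + \<epsilon> / 2 = \<epsilon>" by simp
        ultimately show "l < PN M p q N x {x}" using \<delta>(3) unfolding \<epsilon>_def by linarith
      qed
    qed
  qed
qed

lemma eps_lims:
  assumes x: "x \<in> supp_pi M p"
  shows "(\<lambda>N. eps_avg M p q N) \<longlonglongrightarrow> 0" and "(\<lambda>N. eps_pt M p q N x) \<longlonglongrightarrow> 0"
proof -
  have "(\<lambda>k::nat. Qp.expectation (\<lambda>y. min (w y) (real k) * 1)) \<longlonglongrightarrow> Qp.expectation (\<lambda>y. w y * 1)"
    by (rule trunc) auto
  then have "(\<lambda>k::nat. Qp.expectation (\<lambda>y. min (w y) (real k))) \<longlonglongrightarrow> 1"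
    using w_E by simp
  then have "eventually (\<lambda>k. 1/2 < Qp.expectation (\<lambda>y. min (w y) (real k))) sequentially"
    by (rule order_tendstoD(1)) simp
  then obtain k :: nat where k: "1/2 < Qp.expectation (\<lambda>y. min (w y) (real k))"
    unfolding eventually_sequentially by auto
  define c where "c = real k"
  define m1 where "m1 = Qp.expectation (\<lambda>y. min (w y) c)"
  have m1: "0 < m1" using k unfolding m1_def c_def by simp
  have c: "0 \<le> c" unfolding c_def by simp
  define B where "B N = 16 * c^2 / ((real N - 1) * m1^2)" for N :: nat
  have Blim: "B \<longlonglongrightarrow> 0" unfolding B_def[abs_def] by (rule lim_invN)
  have B0: "0 \<le> B N" if "2 \<le> N" for N unfolding B_def using that m1 by simp
  have eb: "eps_pt M p q N y \<le> 2 * w y / ((real N - 1) * m1) + B N" if "0 < w y" "2 \<le> N" for N y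
    unfolding B_def by (rule eps_bound[OF c m1_def m1 that])
  show "(\<lambda>N. eps_pt M p q N x) \<longlonglongrightarrow> 0"
  proof (rule tendsto_sandwich[of "\<lambda>_. 0" _ _ "\<lambda>N. 2 * w x / ((real N - 1) * m1) + B N"])
    show "\<forall>\<^sub>F N in sequentially. 0 \<le> eps_pt M p q N x" by (simp add: eps_nonneg)
    show "\<forall>\<^sub>F N in sequentially. eps_pt M p q N x \<le> 2 * w x / ((real N - 1) * m1) + B N"
      unfolding eventually_sequentially using eb w_pos[OF x] by blast
    show "(\<lambda>N. 2 * w x / ((real N - 1) * m1) + B N) \<longlonglongrightarrow> 0"
      using tendsto_add[OF lim_invN Blim] by simp
  qed simp
  define Pi where "Pi = density M (\<lambda>x. ennreal (p x))"
  interpret Pi: prob_space Pi unfolding Pi_def by (rule pi_prob)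
  define mn where "mn N z = min 1 (max 0 (2 * w z / ((real N - 1) * m1)))" for N :: nat and z
  have mnm[measurable]: "mn N \<in> borel_measurable Pi" for N
    unfolding mn_def[abs_def] Pi_def by measurable
  have mn01: "0 \<le> mn N z \<and> mn N z \<le> 1" if "2 \<le> N" for N z
    unfolding mn_def by auto
  have mnlim: "(\<lambda>N. integral\<^sup>L Pi (mn N)) \<longlonglongrightarrow> integral\<^sup>L Pi (\<lambda>_. 0)"
  proof (rule integral_dominated_convergence[where w="\<lambda>_. 1"])
    show "AE z in Pi. (\<lambda>N. mn N z) \<longlonglongrightarrow> 0"
    proof (rule AE_I2)
      fix z
      have "(\<lambda>N. min 1 (max 0 (2 * w z / ((real N - 1) * m1)))) \<longlonglongrightarrow> min 1 (max 0 0)"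
        by (intro tendsto_min tendsto_max tendsto_const lim_invN)
      then show "(\<lambda>N. mn N z) \<longlonglongrightarrow> 0" unfolding mn_def by simp
    qed
    show "AE z in Pi. norm (mn N z) \<le> 1" for N
    proof (rule AE_I2)
      fix z
      show "norm (mn N z) \<le> 1" unfolding mn_def by auto
    qed
  qed auto
  define Fe where "Fe N z = indicator (supp_pi M p) z * eps_pt M p q N z" for N z
  have Fe_le: "Fe N z \<le> mn N z + B N" if "2 \<le> N" for N z
  proof (cases "z \<in> supp_pi M p")
    case True
    have e1: "eps_pt M p q N z \<le> 1" using eps_le1[OF w_pos[OF True]] that by simp
    have e2: "eps_pt M p q N z \<le> 2 * w z / ((real N - 1) * m1) + B N" using eb[OF w_pos[OF True] that] .
    have "0 \<le> 2 * w z / ((real N - 1) * m1)" using that m1 w_nonneg[of z] by simp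
    then show ?thesis using True e1 e2 B0[OF that] unfolding Fe_def mn_def by (auto simp: min_def)
  next
    case False
    then show ?thesis using mn01[OF that, of z] B0[OF that] unfolding Fe_def by simp
  qed
  have avg_le: "eps_avg M p q N \<le> integral\<^sup>L Pi (mn N) + B N" if N: "2 \<le> N" for N
  proof -
    have bint: "integrable Pi (\<lambda>z. mn N z + B N)"
    proof (rule Pi.integrable_const_bound[where B="1 + B N"])
      show "AE z in Pi. norm (mn N z + B N) \<le> 1 + B N"
        using mn01[OF N] B0[OF N] by (intro AE_I2) auto
    qed simp
    have "eps_avg M p q N \<le> integral\<^sup>L Pi (\<lambda>z. mn N z + B N)"
    proof (cases "integrable Pi (Fe N)")
      case True
      then show ?thesis unfolding eps_avg_def Pi_def[symmetric] Fe_def[symmetric]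
        using bint Fe_le[OF N] by (intro Bochner_Integration.integral_mono) auto
    next
      case False
      then have "eps_avg M p q N = 0" unfolding eps_avg_def Pi_def[symmetric] Fe_def[symmetric]
        by (rule not_integrable_integral_eq)
      moreover have "0 \<le> integral\<^sup>L Pi (\<lambda>z. mn N z + B N)"
        using mn01[OF N] B0[OF N] by (intro Bochner_Integration.integral_nonneg) auto
      ultimately show ?thesis by simp
    qed
    also have "\<dots> = integral\<^sup>L Pi (mn N) + B N"
    proof -
      have mint: "integrable Pi (mn N)"
      proof (rule Pi.integrable_const_bound[where B=1])
        show "AE z in Pi. norm (mn N z) \<le> 1" using mn01[OF N] by (intro AE_I2) auto
      qed simp
      show ?thesis using mint by (subst Bochner_Integration.integral_add) (auto simp: Pi.prob_space)
    qed
    finally show ?thesis .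
  qed
  show "(\<lambda>N. eps_avg M p q N) \<longlonglongrightarrow> 0"
  proof (rule tendsto_sandwich[of "\<lambda>_. 0" _ _ "\<lambda>N. integral\<^sup>L Pi (mn N) + B N"])
    show "\<forall>\<^sub>F N in sequentially. 0 \<le> eps_avg M p q N"
      unfolding eps_avg_def using eps_nonneg
      by (intro always_eventually allI Bochner_Integration.integral_nonneg) auto
    show "\<forall>\<^sub>F N in sequentially. eps_avg M p q N \<le> integral\<^sup>L Pi (mn N) + B N"
      unfolding eventually_sequentially using avg_le by blast
    show "(\<lambda>N. integral\<^sup>L Pi (mn N) + B N) \<longlonglongrightarrow> 0"
      using tendsto_add[OF mnlim Blim] by simp
  qed simp
qed

end

theorem lemma6p10:
  fixes M :: "'a measure" and p q :: "'a \<Rightarrow> real" and x :: 'a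
  assumes "sigma_finite_measure M"
    and "\<And>y. y \<in> space M \<Longrightarrow> {y} \<in> sets M"
    and "p \<in> borel_measurable M" and "q \<in> borel_measurable M"
    and "\<And>y. y \<in> space M \<Longrightarrow> p y \<ge> 0"
    and "\<And>y. y \<in> space M \<Longrightarrow> q y \<ge> 0"
    and "(\<integral>\<^sup>+ y. ennreal (p y) \<partial>M) = 1"
    and "(\<integral>\<^sup>+ y. ennreal (q y) \<partial>M) = 1"
    and "\<And>y. y \<in> space M \<Longrightarrow> p y > 0 \<Longrightarrow> q y > 0"
    and "x \<in> supp_pi M p"
  shows "(\<lambda>N. eps_avg M p q N) \<longlonglongrightarrow> 0 \<and>
    (\<lambda>N. eps_pt M p q N x) \<longlonglongrightarrow> 0 \<and>
    (\<lambda>N. PN M p q N x {x}) \<longlonglongrightarrow> measure (density M (\<lambda>y. ennreal (p y))) {x}"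
proof -
  interpret ctx M p q by (rule ctx.intro) (use assms in auto)
  show ?thesis
    using eps_lims[OF assms(10)] PN_lim[OF assms(10)] point_mass(3)[OF assms(10)] by simp
qed

end
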